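(* The functor $\mathrm{Max}$ from the category of unital C*-algebras (with unital *-homomorphisms) to the category of unital involutive quantales (with unital involutive homomorphisms) does not preserve products.
   Context: A quantale is a complete lattice with an associative multiplication distributing over arbitrary joins in both variables; it is unital if it has a multiplicative unit; an involutive quantale has an involution $^*$ with $a^{**}=a$, $(a\cdot b)^*=b^*\cdot a^*$, $(\bigvee a_i)^*=\bigvee a_i^*$; morphisms preserve joins, multiplication, unit and involution. For a unital C*-algebra $A$, $\mathrm{Max}\,A$ is the quantale of all closed linear subspaces of $A$ with join $\bigvee_i M_i=\overline{\sum_i M_i}$, product $M\cdot N=$ closure of the linear span of $\{ab:a\in M,b\in N\}$, involution $M^*=\{a^*:a\in M\}$, and unit the subspace spanned by the identity. For a unital *-homomorphism $f:A\to B$, $\mathrm{Max}\,f(M)=\overline{f[M]}$. *)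

theory Defs
  imports "HOL-Analysis.Analysis"
begin

class unital_cstar_algebra = banach + real_normed_algebra_1 +
  fixes scaleC :: "complex \<Rightarrow> 'a \<Rightarrow> 'a"
    and cstar :: "'a \<Rightarrow> 'a"
  assumes scaleC_add_right: "scaleC c (x + y) = scaleC c x + scaleC c y"
    and scaleC_add_left: "scaleC (c + d) x = scaleC c x + scaleC d x"
    and scaleC_scaleC: "scaleC c (scaleC d x) = scaleC (c * d) x"
    and scaleC_one: "scaleC 1 x = x"
    and scaleR_scaleC: "scaleR r x = scaleC (complex_of_real r) x"
    and norm_scaleC: "norm (scaleC c x) = cmod c * norm x"
    and scaleC_mult_left: "scaleC c x * y = scaleC c (x * y)"
    and scaleC_mult_right: "x * scaleC c y = scaleC c (x * y)"
    and cstar_cstar: "cstar (cstar x) = x"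
    and cstar_add: "cstar (x + y) = cstar x + cstar y"
    and cstar_scaleC: "cstar (scaleC c x) = scaleC (cnj c) (cstar x)"
    and cstar_mult: "cstar (x * y) = cstar y * cstar x"
    and cstar_identity: "norm (cstar x * x) = (norm x)\<^sup>2"

instantiation complex :: unital_cstar_algebra
begin
definition scaleC_complex :: "complex \<Rightarrow> complex \<Rightarrow> complex" where
  "scaleC_complex c x = c * x"
definition cstar_complex :: "complex \<Rightarrow> complex" where
  "cstar_complex x = cnj x"
instance
  by standard (auto simp: scaleC_complex_def cstar_complex_def algebra_simps
      scaleR_conv_of_real norm_mult complex_norm_square[symmetric] power2_eq_square)
end

record 'q iquantale =
  qcar :: "'q set"
  qsup :: "'q set \<Rightarrow> 'q"
  qmul :: "'q \<Rightarrow> 'q \<Rightarrow> 'q"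
  qone :: "'q"
  qinv :: "'q \<Rightarrow> 'q"

definition iq_hom :: "('q, 'm) iquantale_scheme \<Rightarrow> ('r, 'n) iquantale_scheme \<Rightarrow> ('q \<Rightarrow> 'r) \<Rightarrow> bool" where
  "iq_hom Q R h \<longleftrightarrow>
     (\<forall>x\<in>qcar Q. h x \<in> qcar R) \<and>
     (\<forall>S. S \<subseteq> qcar Q \<longrightarrow> h (qsup Q S) = qsup R (h ` S)) \<and>
     (\<forall>x\<in>qcar Q. \<forall>y\<in>qcar Q. h (qmul Q x y) = qmul R (h x) (h y)) \<and>
     h (qone Q) = qone R \<and>
     (\<forall>x\<in>qcar Q. h (qinv Q x) = qinv R (h x))"

text \<open>Isomorphism: a bijective homomorphism (its inverse is then automatically
  a homomorphism).\<close>
definition iq_iso :: "('q, 'm) iquantale_scheme \<Rightarrow> ('r, 'n) iquantale_scheme \<Rightarrow> ('q \<Rightarrow> 'r) \<Rightarrow> bool" where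
  "iq_iso Q R h \<longleftrightarrow> iq_hom Q R h \<and> bij_betw h (qcar Q) (qcar R)"

definition prod_q :: "'q iquantale \<Rightarrow> 'r iquantale \<Rightarrow> ('q \<times> 'r) iquantale" where
  "prod_q Q R = \<lparr> qcar = qcar Q \<times> qcar R,
     qsup = (\<lambda>S. (qsup Q (fst ` S), qsup R (snd ` S))),
     qmul = (\<lambda>x y. (qmul Q (fst x) (fst y), qmul R (snd x) (snd y))),
     qone = (qone Q, qone R),
     qinv = (\<lambda>x. (qinv Q (fst x), qinv R (snd x))) \<rparr>"

definition csubspace :: "(complex \<Rightarrow> 'a::ab_group_add \<Rightarrow> 'a) \<Rightarrow> 'a set \<Rightarrow> bool" where
  "csubspace sc M \<longleftrightarrow> 0 \<in> M \<and> (\<forall>x\<in>M. \<forall>y\<in>M. x + y \<in> M) \<and> (\<forall>c. \<forall>x\<in>M. sc c x \<in> M)"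

definition cspan :: "(complex \<Rightarrow> 'a::ab_group_add \<Rightarrow> 'a) \<Rightarrow> 'a set \<Rightarrow> 'a set" where
  "cspan sc X = \<Inter>{M. csubspace sc M \<and> X \<subseteq> M}"

definition Max_gen :: "(complex \<Rightarrow> 'a::{ab_group_add,topological_space} \<Rightarrow> 'a) \<Rightarrow>
    ('a \<Rightarrow> 'a \<Rightarrow> 'a) \<Rightarrow> 'a \<Rightarrow> ('a \<Rightarrow> 'a) \<Rightarrow> 'a set iquantale" where
  "Max_gen sc mul one st = \<lparr>
     qcar = {M. csubspace sc M \<and> closed M},
     qsup = (\<lambda>Ms. closure (cspan sc (\<Union>Ms))),
     qmul = (\<lambda>M N. closure (cspan sc {mul a b | a b. a \<in> M \<and> b \<in> N})),
     qone = cspan sc {one},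
     qinv = (\<lambda>M. st ` M) \<rparr>"

definition MaxQ :: "'a::unital_cstar_algebra itself \<Rightarrow> 'a set iquantale" where
  "MaxQ _ = Max_gen scaleC (*) 1 cstar"

text \<open>The product C*-algebra A \<times> B: componentwise operations, max norm;
  the max norm induces the product topology, which is the topology of the
  product type used here.\<close>
definition MaxQ_prod :: "'a::unital_cstar_algebra itself \<Rightarrow> 'b::unital_cstar_algebra itself
    \<Rightarrow> ('a \<times> 'b) set iquantale" where
  "MaxQ_prod _ _ = Max_gen (\<lambda>c x. (scaleC c (fst x), scaleC c (snd x)))
      (\<lambda>x y. (fst x * fst y, snd x * snd y)) (1, 1)
      (\<lambda>x. (cstar (fst x), cstar (snd x)))"

definition Max_map :: "('a::topological_space \<Rightarrow> 'b::topological_space) \<Rightarrow> 'a set \<Rightarrow> 'b set" where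
  "Max_map f M = closure (f ` M)"

end

theory Submission
  imports Defs
begin

lemma scaleC_zero_left: "scaleC 0 (x::'a::unital_cstar_algebra) = 0"
  using scaleC_add_left[of 0 0 x] by simp

lemma scaleC_of_real_mult: "scaleC (complex_of_real r * c) (x::'a::unital_cstar_algebra) = r *\<^sub>R scaleC c x"
  by (simp add: scaleR_scaleC scaleC_scaleC)

lemma norm_scaleC_one: "norm (scaleC c (1::'a::unital_cstar_algebra)) = cmod c"
  by (simp add: norm_scaleC)

lemma closed_pair_image:
  fixes g :: "'c::banach \<Rightarrow> 'a::unital_cstar_algebra \<times> 'b::unital_cstar_algebra"
  assumes "bounded_linear g" "\<And>x. norm (g x) \<ge> norm x"
  shows "closed (range g)"
proof -
  have "complete (g ` UNIV)"
    by (rule complete_isometric_image[where e=1]) (use assms in auto)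
  then show ?thesis by (rule complete_imp_closed)
qed

theorem theorem5p2:
  fixes A :: "'a::unital_cstar_algebra itself" and B :: "'b::unital_cstar_algebra itself"
  shows "\<not> iq_iso (MaxQ_prod A B) (prod_q (MaxQ A) (MaxQ B))
            (\<lambda>M. (Max_map fst M, Max_map snd M))"
proof
  assume iso: "iq_iso (MaxQ_prod A B) (prod_q (MaxQ A) (MaxQ B))
            (\<lambda>M. (Max_map fst M, Max_map snd M))"
  define g1 :: "complex \<Rightarrow> 'a \<times> 'b" where "g1 c = (scaleC c 1, scaleC c 1)" for c
  define g2 :: "complex \<times> complex \<Rightarrow> 'a \<times> 'b" where "g2 p = (scaleC (fst p) 1, scaleC (snd p) 1)" for p
  have bl1: "bounded_linear g1"
  proof (rule bounded_linear_intro[where K=2])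
    fix x y show "g1 (x + y) = g1 x + g1 y" by (simp add: g1_def scaleC_add_left)
  next
    fix r x show "g1 (r *\<^sub>R x) = r *\<^sub>R g1 x"
      by (simp add: g1_def scaleR_conv_of_real scaleC_of_real_mult)
  next
    fix x show "norm (g1 x) \<le> norm x * 2"
      using norm_Pair_le[of "scaleC x (1::'a)" "scaleC x (1::'b)"]
      by (simp add: g1_def norm_scaleC_one)
  qed
  have n1: "norm (g1 x) \<ge> norm x" for x
    using norm_fst_le[of "scaleC x (1::'a)" "scaleC x (1::'b)"] by (simp add: g1_def norm_scaleC_one)
  have bl2: "bounded_linear g2"
  proof (rule bounded_linear_intro[where K=2])
    fix x y show "g2 (x + y) = g2 x + g2 y" by (simp add: g2_def scaleC_add_left)
  next
    fix r x show "g2 (r *\<^sub>R x) = r *\<^sub>R g2 x"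
      by (simp add: g2_def scaleR_conv_of_real scaleC_of_real_mult)
  next
    fix x :: "complex \<times> complex"
    have "norm (g2 x) \<le> norm (fst x) + norm (snd x)"
      using norm_Pair_le[of "scaleC (fst x) (1::'a)" "scaleC (snd x) (1::'b)"]
      by (simp add: g2_def norm_scaleC_one)
    also have "\<dots> \<le> norm x * 2" using norm_fst_le[of "fst x" "snd x"] norm_snd_le[of "snd x" "fst x"] by simp
    finally show "norm (g2 x) \<le> norm x * 2" .
  qed
  have n2: "norm (g2 x) \<ge> norm x" for x
    by (cases x) (simp add: g2_def norm_scaleC_one norm_Pair)
  let ?sc = "(\<lambda>c (x::'a\<times>'b). (scaleC c (fst x), scaleC c (snd x)))"
  have cs1: "csubspace ?sc (range g1)"
    unfolding csubspace_def g1_def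
    apply (intro conjI ballI allI)
      apply (rule image_eqI[where x=0]; simp add: scaleC_zero_left zero_prod_def)
     apply (auto simp: scaleC_add_left[symmetric] scaleC_scaleC)
    done
  have cs2: "csubspace ?sc (range g2)"
    unfolding csubspace_def
  proof (intro conjI ballI allI)
    show "0 \<in> range g2"
      by (rule image_eqI[where x="(0,0)"]) (simp_all add: g2_def scaleC_zero_left zero_prod_def)
  next
    fix x y assume "x \<in> range g2" "y \<in> range g2"
    then obtain p q where "x = g2 p" "y = g2 q" by auto
    then show "x + y \<in> range g2"
      by (intro image_eqI[where x="p+q"]) (simp_all add: g2_def scaleC_add_left)
  next
    fix c x assume "x \<in> range g2"
    then obtain p where "x = g2 p" by auto
    then show "?sc c x \<in> range g2"
      by (intro image_eqI[where x="(c * fst p, c * snd p)"]) (simp_all add: g2_def scaleC_scaleC)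
  qed
  have c1: "range g1 \<in> qcar (MaxQ_prod A B)"
    using cs1 closed_pair_image[OF bl1 n1] by (simp add: MaxQ_prod_def Max_gen_def)
  have c2: "range g2 \<in> qcar (MaxQ_prod A B)"
    using cs2 closed_pair_image[OF bl2 n2] by (simp add: MaxQ_prod_def Max_gen_def)
  have f1: "fst ` range g1 = range (\<lambda>c. scaleC c (1::'a))"
    by (simp add: image_image g1_def)
  have f2: "fst ` range g2 = range (\<lambda>c. scaleC c (1::'a))"
    by (rule set_eqI) (auto simp: g2_def image_iff)
  have s1: "snd ` range g1 = range (\<lambda>c. scaleC c (1::'b))"
    by (simp add: image_image g1_def)
  have s2: "snd ` range g2 = range (\<lambda>c. scaleC c (1::'b))"
    by (rule set_eqI) (auto simp: g2_def image_iff)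
  have f: "fst ` range g1 = fst ` range g2" using f1 f2 by simp
  have s: "snd ` range g1 = snd ` range g2" using s1 s2 by simp
  have ne: "range g1 \<noteq> range g2"
  proof
    assume "range g1 = range g2"
    moreover have "g2 (1,0) \<in> range g2" by simp
    ultimately obtain c where "g1 c = g2 (1,0)" by (metis imageE)
    then have "scaleC c (1::'a) = 1" "scaleC c (1::'b) = 0"
      by (auto simp: g1_def g2_def scaleC_one scaleC_zero_left)
    then have "cmod c = 1" "cmod c = 0"
      by (metis norm_scaleC_one norm_one, metis norm_scaleC_one norm_zero)
    then show False by simp
  qed
  from iso have "inj_on (\<lambda>M. (Max_map fst M, Max_map snd M)) (qcar (MaxQ_prod A B))"
    by (simp add: iq_iso_def bij_betw_def)
  then have "range g1 = range g2"
    using c1 c2 f s by (auto simp: inj_on_def Max_map_def)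
  with ne show False by simp
qed

end
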